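(* Let $G\neq \{0\}$ be a finite abelian group. Let $B$ be a zero-sum sequence over $G$ and let $g \in G\setminus \{0\}$. Then $\max \mathsf{L}(B(-g)g)= 1+\max \mathsf{L}(B)$. In particular, $\mathsf{D}_{k+1}(G)\ge \mathsf{D}_{k}(G)+ 2$ for each $k \in \mathbb{N}$. Moreover, if $C$ is a zero-sum sequence over $G$ with $\max \mathsf{L}(C)\le k$ and $|C|= \mathsf{D}_k(G)$, then $0$ does not occur as a term of $C$.
   Context: A sequence over $G$ is an element of the multiplicatively written free abelian monoid over $G$ (finite unordered list of elements with repetitions); $B(-g)g$ denotes $B$ with the two terms $-g$ and $g$ appended. Zero-sum means the terms sum to $0$; a minimal zero-sum sequence is a non-empty zero-sum sequence with no proper non-empty zero-sum subsequence; for a zero-sum sequence $B$, $\mathsf{L}(B)$ is the set of all $t$ such that $B$ is a product of $t$ minimal zero-sum sequences. $\mathsf{D}_k(G)$ is the smallest $\ell$ such that every sequence over $G$ of length at least $\ell$ has $k$ disjoint non-empty zero-sum subsequences. *)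

theory Defs
  imports Main "HOL-Library.Multiset"
begin

text \<open>Sequences over an abelian group are finite multisets of elements.
  The group G is the whole (finite) type 'a of class ab_group_add.\<close>

definition zero_sum :: "'a::ab_group_add multiset \<Rightarrow> bool" where
  "zero_sum B \<longleftrightarrow> sum_mset B = 0"

definition minimal_zero_sum :: "'a::ab_group_add multiset \<Rightarrow> bool" where
  "minimal_zero_sum B \<longleftrightarrow> B \<noteq> {#} \<and> zero_sum B \<and>
     (\<forall>A. A \<subseteq># B \<and> A \<noteq> {#} \<and> zero_sum A \<longrightarrow> A = B)"

definition Lset :: "'a::ab_group_add multiset \<Rightarrow> nat set" where
  "Lset B = {t. \<exists>F. (\<forall>A\<in>#F. minimal_zero_sum A) \<and> sum_mset F = B \<and> size F = t}"

definition has_k_disjoint_zs :: "'a::ab_group_add multiset \<Rightarrow> nat \<Rightarrow> bool" where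
  "has_k_disjoint_zs S k \<longleftrightarrow>
     (\<exists>F. size F = k \<and> (\<forall>A\<in>#F. A \<noteq> {#} \<and> zero_sum A) \<and> sum_mset F \<subseteq># S)"

definition Dk :: "'a::ab_group_add set \<Rightarrow> nat \<Rightarrow> nat" where
  "Dk G k = (LEAST l. \<forall>S. set_mset S \<subseteq> G \<and> size S \<ge> l \<longrightarrow> has_k_disjoint_zs S k)"

end

theory Submission
  imports Defs
begin


lemma size_le_sum: "(\<forall>A\<in>#F. A \<noteq> {#}) \<Longrightarrow> size F \<le> size (sum_mset F)"
proof (induction F)
  case empty then show ?case by simp
next
  case (add A F)
  then have "size A \<ge> 1" by (simp add: Suc_le_eq nonempty_has_size)
  with add show ?case by simp
qed

lemma minimal_nonempty: "minimal_zero_sum A \<Longrightarrow> A \<noteq> {#}"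
  by (simp add: minimal_zero_sum_def)

lemma Lset_bound: "t \<in> Lset B \<Longrightarrow> t \<le> size B"
  unfolding Lset_def using size_le_sum minimal_nonempty by blast

lemma Lset_finite: "finite (Lset B)"
  using Lset_bound by (meson finite_atMost finite_subset atMost_iff subsetI)

lemma Lset_add: "s \<in> Lset A \<Longrightarrow> t \<in> Lset C \<Longrightarrow> s + t \<in> Lset (A + C)"
proof -
  assume "s \<in> Lset A" "t \<in> Lset C"
  then obtain F1 F2 where "\<forall>X\<in>#F1. minimal_zero_sum X" "sum_mset F1 = A" "size F1 = s"
    "\<forall>X\<in>#F2. minimal_zero_sum X" "sum_mset F2 = C" "size F2 = t" unfolding Lset_def by blast
  then show ?thesis unfolding Lset_def by (auto intro!: exI[where x="F1 + F2"])
qed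

lemma zero_sum_add: "zero_sum A \<Longrightarrow> zero_sum C \<Longrightarrow> zero_sum (A + C)"
  by (simp add: zero_sum_def)

lemma zero_sum_diff: "zero_sum B \<Longrightarrow> zero_sum A \<Longrightarrow> A \<subseteq># B \<Longrightarrow> zero_sum (B - A)"
  by (simp add: zero_sum_def sum_mset_diff)

lemma factor_exists: "zero_sum B \<Longrightarrow> \<exists>t. t \<in> Lset B"
proof (induction "size B" arbitrary: B rule: less_induct)
  case less
  show ?case
  proof (cases "B = {#}")
    case True
    then have "0 \<in> Lset B" unfolding Lset_def by (auto intro!: exI[where x="{#}"])
    then show ?thesis by blast
  next
    case ne: False
    show ?thesis
    proof (cases "minimal_zero_sum B")
      case True
      then have "1 \<in> Lset B" unfolding Lset_def by (auto intro!: exI[where x="{#B#}"])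
      then show ?thesis by blast
    next
      case False
      then obtain A where A: "A \<subseteq># B" "A \<noteq> {#}" "zero_sum A" "A \<noteq> B"
        using ne less.prems unfolding minimal_zero_sum_def by blast
      have s1: "size A < size B" using A by (simp add: mset_subset_size subset_mset.le_neq_trans)
      have s2: "size (B - A) < size B" using A
        using s1 by (simp add: size_Diff_submset nonempty_has_size)
      obtain s t where "s \<in> Lset A" "t \<in> Lset (B - A)"
        using less.hyps[OF s1 A(3)] less.hyps[OF s2 zero_sum_diff[OF less.prems A(3) A(1)]] by blast
      from Lset_add[OF this] A(1) show ?thesis by (metis subset_mset.add_diff_inverse)
    qed
  qed
qed

lemma factor_pos: "zero_sum B \<Longrightarrow> B \<noteq> {#} \<Longrightarrow> \<exists>t\<ge>1. t \<in> Lset B"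
proof -
  assume "zero_sum B" "B \<noteq> {#}"
  then obtain t where t: "t \<in> Lset B" using factor_exists by blast
  then obtain F where F: "sum_mset F = B" "size F = t" unfolding Lset_def by blast
  have "F \<noteq> {#}" using F \<open>B \<noteq> {#}\<close> by auto
  then have "t \<ge> 1" using F by (simp add: Suc_le_eq nonempty_has_size)
  with t show ?thesis by blast
qed

lemma Max_ge_L: "t \<in> Lset B \<Longrightarrow> t \<le> Max (Lset B)"
  by (rule Max_ge[OF Lset_finite])

lemma Max_in_L: "zero_sum B \<Longrightarrow> Max (Lset B) \<in> Lset B"
proof -
  assume "zero_sum B"
  then have "Lset B \<noteq> {}" using factor_exists by blast
  then show ?thesis using Lset_finite by (rule Max_in[rotated])
qed

lemma Max_le_L: "zero_sum B \<Longrightarrow> (\<And>t. t \<in> Lset B \<Longrightarrow> t \<le> k) \<Longrightarrow> Max (Lset B) \<le> k"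
  using Max_in_L by blast



lemma minimal_pair: "g \<noteq> (0::'a::ab_group_add) \<Longrightarrow> minimal_zero_sum {#-g, g#}"
  unfolding minimal_zero_sum_def zero_sum_def
proof (intro conjI allI impI)
  fix A assume g: "g \<noteq> 0" and A: "A \<subseteq># {#-g, g#} \<and> A \<noteq> {#} \<and> sum_mset A = 0"
  show "A = {#-g, g#}"
  proof (rule ccontr)
    assume "A \<noteq> {#-g, g#}"
    have sz: "size A \<le> 2" using A size_mset_mono[of A "{#-g, g#}"] by simp
    have "size A \<noteq> 2"
    proof
      assume "size A = 2"
      then have "\<not> A \<subset># {#-g, g#}" using mset_subset_size by fastforce
      with A \<open>A \<noteq> {#-g, g#}\<close> show False by (simp add: subset_mset.le_less)
    qed
    moreover have "size A \<noteq> 0" using A by simp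
    ultimately have "size A = 1" using sz by linarith
    then obtain x where x: "A = {#x#}" using size_1_singleton_mset by blast
    with A have "x = -g \<or> x = g" by (auto simp: insert_subset_eq_iff)
    with A x g show False by auto
  qed
qed auto

lemma minimal_zero: "minimal_zero_sum {#0::'a::ab_group_add#}"
  unfolding minimal_zero_sum_def zero_sum_def
proof (intro conjI allI impI)
  fix A :: "'a multiset" assume "A \<subseteq># {#0#} \<and> A \<noteq> {#} \<and> sum_mset A = 0"
  then show "A = {#0#}" using nonempty_subseteq_mset_iff_single[of A 0 True] by simp
qed auto

lemma part1_ge:
  fixes g :: "'a::ab_group_add"
  assumes B: "zero_sum B" and g: "g \<noteq> 0"
  shows "1 + Max (Lset B) \<le> Max (Lset (B + {#-g, g#}))"
proof -
  have "1 \<in> Lset {#-g, g#}" unfolding Lset_def using minimal_pair[OF g]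
    by (auto intro!: exI[where x="{#{#-g, g#}#}"])
  from Lset_add[OF Max_in_L[OF B] this] have "Max (Lset B) + 1 \<in> Lset (B + {#-g, g#})" .
  from Max_ge_L[OF this] show ?thesis by simp
qed

lemma part1_le:
  fixes g :: "'a::ab_group_add"
  assumes B: "zero_sum B" and g: "g \<noteq> 0"
  shows "Max (Lset (B + {#-g, g#})) \<le> 1 + Max (Lset B)"
proof -
  have B': "zero_sum (B + {#-g, g#})" using B by (simp add: zero_sum_def)
  obtain F where F: "\<forall>X\<in>#F. minimal_zero_sum X" "sum_mset F = B + {#-g, g#}"
      "size F = Max (Lset (B + {#-g, g#}))"
    using Max_in_L[OF B'] unfolding Lset_def by blast
  have "-g \<in># sum_mset F" using F by simp
  then obtain A1 where A1: "A1 \<in># F" "-g \<in># A1" by auto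
  define F1 where "F1 = F - {#A1#}"
  have FF1: "F = add_mset A1 F1" using A1 F1_def by simp
  define A1' where "A1' = A1 - {#-g#}"
  have AA1: "A1 = add_mset (-g) A1'" using A1 A1'_def by simp
  have m1: "minimal_zero_sum A1" using F A1 by auto
  have sA1': "sum_mset A1' = g" using m1 AA1 unfolding minimal_zero_sum_def zero_sum_def
    by (simp add: add_eq_0_iff)
  have eq1: "sum_mset F1 + A1' = B + {#g#}" using F(2) FF1 AA1 by (simp add: add.commute)
  show ?thesis
  proof (cases "g \<in># A1'")
    case True
    then have "{#-g, g#} \<subseteq># A1" using AA1 by (simp add: mset_subset_eq_single)
    moreover have "{#-g, g#} \<noteq> {#}" "zero_sum {#-g, g#}" by (auto simp: zero_sum_def)
    ultimately have "{#-g, g#} = A1" using m1 unfolding minimal_zero_sum_def by blast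
    then have "sum_mset F1 = B" using F(2) FF1 by simp
    then have "size F1 \<in> Lset B" using F FF1 unfolding Lset_def by auto
    then show ?thesis using F(3) FF1 Max_ge_L by fastforce
  next
    case False
    then have "g \<in># sum_mset F1" using eq1
      by (metis add_mset_add_single union_iff union_single_eq_member)
    then obtain A2 where A2: "A2 \<in># F1" "g \<in># A2" by auto
    define F2 where "F2 = F1 - {#A2#}"
    have FF2: "F1 = add_mset A2 F2" using A2 F2_def by simp
    define A2' where "A2' = A2 - {#g#}"
    have AA2: "A2 = add_mset g A2'" using A2 A2'_def by simp
    have m2: "minimal_zero_sum A2" using F A2 FF1 by auto
    have sA2': "sum_mset A2' = -g" using m2 AA2 unfolding minimal_zero_sum_def zero_sum_def
      by (simp add: add_eq_0_iff)
    define R where "R = A1' + A2'"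
    have zR: "zero_sum R" using sA1' sA2' by (simp add: R_def zero_sum_def)
    have neR: "R \<noteq> {#}" using sA1' g by (auto simp: R_def)
    have eqB: "B = sum_mset F2 + R" using eq1 FF2 AA2 by (simp add: R_def add_ac)
    obtain s where s: "s \<ge> 1" "s \<in> Lset R" using factor_pos[OF zR neR] by blast
    have "size F2 \<in> Lset (sum_mset F2)" using F FF1 FF2 unfolding Lset_def by auto
    from Lset_add[OF this s(2)] eqB have "size F2 + s \<in> Lset B" by simp
    then have "size F2 + s \<le> Max (Lset B)" by (rule Max_ge_L)
    then show ?thesis using F(3) FF1 FF2 s(1) by simp
  qed
qed

lemma part1:
  fixes g :: "'a::ab_group_add"
  assumes B: "zero_sum B" and g: "g \<noteq> 0"
  shows "Max (Lset (B + {#-g, g#})) = 1 + Max (Lset B)"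
  using part1_ge[OF assms] part1_le[OF assms] by simp



lemma exists_sub_size: "n \<le> size (S::'b multiset) \<Longrightarrow> \<exists>T. T \<subseteq># S \<and> size T = n"
proof -
  assume n: "n \<le> size S"
  obtain xs where xs: "mset xs = S" using ex_mset by blast
  have "mset (take n xs) \<subseteq># mset xs"
    by (metis append_take_drop_id mset_append mset_subset_eq_add_left)
  moreover have "size (mset (take n xs)) = n" using n xs[symmetric] by simp
  ultimately show ?thesis using xs by blast
qed

lemma davenport_one:
  fixes S :: "'a::{ab_group_add, finite} multiset"
  assumes "size S \<ge> card (UNIV :: 'a set)"
  shows "\<exists>A. A \<subseteq># S \<and> A \<noteq> {#} \<and> zero_sum A"
proof -
  obtain xs where xs: "mset xs = S" using ex_mset by blast
  define n where "n = length xs"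
  define p where "p i = sum_list (take i xs)" for i
  have "card (p ` {0..n}) \<le> card (UNIV :: 'a set)" by (rule card_mono) auto
  also have "\<dots> < card {0..n}" using assms xs[symmetric] n_def by simp
  finally have "\<not> inj_on p {0..n}" using card_image by fastforce
  then obtain i j where ij: "i \<in> {0..n}" "j \<in> {0..n}" "i \<noteq> j" "p i = p j"
    unfolding inj_on_def by blast
  have "\<exists>i j. i < j \<and> j \<le> n \<and> p i = p j"
    using ij by (metis atLeastAtMost_iff linorder_neqE_nat)
  then obtain i j where ij: "i < j" "j \<le> n" "p i = p j" by blast
  define ys where "ys = take (j - i) (drop i xs)"
  have tj: "take j xs = take i xs @ ys"
    unfolding ys_def using ij by (metis le_add_diff_inverse less_imp_le take_add)
  have "sum_list ys = 0" using ij(3) tj unfolding p_def by simp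
  then have z: "zero_sum (mset ys)" by (simp add: zero_sum_def sum_mset_sum_list)
  have ne: "mset ys \<noteq> {#}" using ij n_def unfolding ys_def by simp
  have "mset ys \<subseteq># mset (drop i xs)"
    unfolding ys_def by (metis append_take_drop_id mset_append mset_subset_eq_add_left)
  also have "\<dots> \<subseteq># mset xs"
    by (metis append_take_drop_id mset_append mset_subset_eq_add_right)
  finally show ?thesis using z ne xs by blast
qed

lemma davenport_k:
  fixes S :: "'a::{ab_group_add, finite} multiset"
  shows "size S \<ge> k * card (UNIV :: 'a set) \<Longrightarrow> has_k_disjoint_zs S k"
proof (induction k arbitrary: S)
  case 0
  then show ?case unfolding has_k_disjoint_zs_def by (auto intro!: exI[where x="{#}"])
next
  case (Suc k)
  obtain T where T: "T \<subseteq># S" "size T = card (UNIV :: 'a set)"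
    using exists_sub_size[of "card (UNIV :: 'a set)" S] Suc.prems by auto
  obtain A where A: "A \<subseteq># T" "A \<noteq> {#}" "zero_sum A" using davenport_one[of T] T by auto
  have AS: "A \<subseteq># S" using A T by auto
  have "size A \<le> card (UNIV :: 'a set)" using A T size_mset_mono by fastforce
  then have "size (S - A) \<ge> k * card (UNIV :: 'a set)" using Suc.prems AS
    by (simp add: size_Diff_submset)
  then obtain F where F: "size F = k" "\<forall>X\<in>#F. X \<noteq> {#} \<and> zero_sum X" "sum_mset F \<subseteq># S - A"
    using Suc.IH unfolding has_k_disjoint_zs_def by blast
  have "sum_mset (add_mset A F) \<subseteq># S" using F(3) AS
    by (simp add: subset_mset.le_diff_conv2 add.commute)
  then show ?case unfolding has_k_disjoint_zs_def using F A
    by (auto intro!: exI[where x="add_mset A F"])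
qed

lemma Dk_prop:
  fixes S :: "'a::{ab_group_add, finite} multiset"
  assumes "size S \<ge> Dk (UNIV :: 'a set) k"
  shows "has_k_disjoint_zs S k"
proof -
  let ?P = "\<lambda>l. \<forall>S::'a multiset. set_mset S \<subseteq> UNIV \<and> size S \<ge> l \<longrightarrow> has_k_disjoint_zs S k"
  have "?P (k * card (UNIV :: 'a set))" using davenport_k by blast
  then have "?P (Dk (UNIV :: 'a set) k)" unfolding Dk_def by (rule LeastI)
  then show ?thesis using assms by blast
qed

lemma Dk_min:
  assumes "k \<ge> 1"
  shows "\<exists>S::'a::{ab_group_add, finite} multiset. size S = Dk (UNIV :: 'a set) k - 1
     \<and> \<not> has_k_disjoint_zs S k \<and> Dk (UNIV :: 'a set) k \<ge> 1"
proof -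
  let ?P = "\<lambda>l. \<forall>S::'a multiset. set_mset S \<subseteq> UNIV \<and> size S \<ge> l \<longrightarrow> has_k_disjoint_zs S k"
  have "\<not> has_k_disjoint_zs ({#}::'a multiset) k"
  proof
    assume "has_k_disjoint_zs ({#}::'a multiset) k"
    then obtain F :: "'a multiset multiset" where F: "size F = k" "\<forall>X\<in>#F. X \<noteq> {#} \<and> zero_sum X"
      "sum_mset F \<subseteq># {#}" unfolding has_k_disjoint_zs_def by blast
    have "F \<noteq> {#}" using F(1) assms by auto
    then obtain A where A: "A \<in># F" by blast
    have "sum_mset F = A + sum_mset (F - {#A#})" using A by (rule sum_mset.remove)
    then have "A = {#}" using F(3) by simp
    with A F(2) show False by auto
  qed
  then have D1: "Dk (UNIV :: 'a set) k \<ge> 1"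
  proof -
    assume nh: "\<not> has_k_disjoint_zs ({#}::'a multiset) k"
    show ?thesis
    proof (rule ccontr)
      assume "\<not> ?thesis"
      then have "size ({#}::'a multiset) \<ge> Dk (UNIV :: 'a set) k" by simp
      with Dk_prop nh show False by blast
    qed
  qed
  have "\<not> ?P (Dk (UNIV :: 'a set) k - 1)" unfolding Dk_def
    by (rule not_less_Least) (use D1 in \<open>simp add: Dk_def\<close>)
  then obtain S :: "'a multiset" where S: "size S \<ge> Dk (UNIV :: 'a set) k - 1" "\<not> has_k_disjoint_zs S k" by auto
  have "size S < Dk (UNIV :: 'a set) k" using S Dk_prop not_less by blast
  then show ?thesis using S D1 by (intro exI[of _ S]) auto
qed

lemma zs_sum: "(\<forall>X\<in>#F. zero_sum X) \<Longrightarrow> zero_sum (sum_mset F)"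
  by (induction F) (auto simp: zero_sum_def)

lemma many_atoms: "(\<forall>X\<in>#F. X \<noteq> {#} \<and> zero_sum X) \<Longrightarrow> \<exists>t\<ge>size F. t \<in> Lset (sum_mset F)"
proof (induction F)
  case empty
  have "0 \<in> Lset ({#}::'a multiset)" unfolding Lset_def by (auto intro!: exI[where x="{#}"])
  then show ?case by auto
next
  case (add A F)
  then obtain t where t: "t \<ge> size F" "t \<in> Lset (sum_mset F)" by auto
  obtain s where s: "s \<ge> 1" "s \<in> Lset A" using factor_pos add.prems by auto
  from Lset_add[OF s(2) t(2)] s t show ?case by (intro exI[of _ "s + t"]) auto
qed

lemma len_bound:
  fixes B :: "'a::{ab_group_add, finite} multiset"
  assumes k: "k \<ge> 1" and B: "zero_sum B" and M: "Max (Lset B) \<le> k"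
  shows "size B \<le> Dk (UNIV :: 'a set) k"
proof (rule ccontr)
  assume "\<not> ?thesis"
  then have big: "size B > Dk (UNIV :: 'a set) k" by simp
  then have "B \<noteq> {#}" by auto
  then obtain x where x: "x \<in># B" by blast
  define S where "S = B - {#x#}"
  have "size S \<ge> Dk (UNIV :: 'a set) k" using big x unfolding S_def
    by (simp add: size_Diff_singleton)
  then obtain F where F: "size F = k" "\<forall>X\<in>#F. X \<noteq> {#} \<and> zero_sum X" "sum_mset F \<subseteq># S"
    using Dk_prop unfolding has_k_disjoint_zs_def by blast
  define R where "R = B - sum_mset F"
  have FS: "sum_mset F \<subseteq># B" using F(3) unfolding S_def
    using diff_subset_eq_self[of B "{#x#}"] by (rule subset_mset.order_trans)
  have zR: "zero_sum R" unfolding R_def using zs_sum F(2) B FS zero_sum_diff by blast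
  have c1: "count (sum_mset F) x \<le> count S x" using F(3) by (rule mset_subset_eq_count)
  have c2: "count S x = count B x - 1" unfolding S_def by simp
  have c3: "count B x > 0" using x by simp
  have "count (sum_mset F) x < count B x" using c1 c2 c3 by linarith
  then have "x \<in># R" unfolding R_def by (simp add: in_diff_count)
  then have "R \<noteq> {#}" by auto
  then have "\<forall>X\<in>#add_mset R F. X \<noteq> {#} \<and> zero_sum X" using F zR by auto
  from many_atoms[OF this] obtain t where t: "t \<ge> k + 1" "t \<in> Lset B"
    using F(1) FS unfolding R_def by (auto simp: subset_mset.diff_add)
  then show False using Max_ge_L[OF t(2)] M by simp
qed

lemma sum_mset_sub_mono: "F1 \<subseteq># F2 \<Longrightarrow> sum_mset F1 \<subseteq># sum_mset (F2::'b multiset multiset)"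
proof -
  assume "F1 \<subseteq># F2"
  then have "F2 = F1 + (F2 - F1)" by simp
  then have "sum_mset F2 = sum_mset F1 + sum_mset (F2 - F1)" by (metis sum_mset.union)
  then show ?thesis by simp
qed

lemma exists_C:
  assumes k: "k \<ge> 1"
  shows "\<exists>C::'a::{ab_group_add, finite} multiset. zero_sum C \<and> Max (Lset C) \<le> k
     \<and> size C = Dk (UNIV :: 'a set) k"
proof -
  obtain S :: "'a multiset" where S: "size S = Dk (UNIV :: 'a set) k - 1" "\<not> has_k_disjoint_zs S k"
    "Dk (UNIV :: 'a set) k \<ge> 1"
    using Dk_min[OF k] by blast
  define y where "y = - sum_mset S"
  define C where "C = add_mset y S"
  have zC: "zero_sum C" unfolding C_def y_def zero_sum_def by simp
  have "Max (Lset C) \<le> k"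
  proof (rule Max_le_L[OF zC])
    fix t assume "t \<in> Lset C"
    then obtain F where F: "\<forall>X\<in>#F. minimal_zero_sum X" "sum_mset F = C" "size F = t"
      unfolding Lset_def by blast
    have "y \<in># sum_mset F" using F C_def by simp
    then obtain A0 where A0: "A0 \<in># F" "y \<in># A0" by auto
    define F' where "F' = F - {#A0#}"
    have FF: "F = add_mset A0 F'" using A0 F'_def by simp
    define A0' where "A0' = A0 - {#y#}"
    have AA: "A0 = add_mset y A0'" using A0 A0'_def by simp
    have "A0' + sum_mset F' = S" using F(2) FF AA C_def by simp
    then have F'S: "sum_mset F' \<subseteq># S" by (metis mset_subset_eq_add_right)
    show "t \<le> k"
    proof (rule ccontr)
      assume "\<not> t \<le> k"
      then have "size F' \<ge> k" using F(3) FF by simp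
      then obtain F'' where F'': "F'' \<subseteq># F'" "size F'' = k" using exists_sub_size by blast
      have "sum_mset F'' \<subseteq># S" using sum_mset_sub_mono[OF F''(1)] F'S by auto
      moreover have "\<forall>X\<in>#F''. X \<noteq> {#} \<and> zero_sum X"
      proof
        fix X assume "X \<in># F''"
        then have "X \<in># F" using F''(1) FF by (auto dest: mset_subset_eqD)
        then show "X \<noteq> {#} \<and> zero_sum X" using F(1) unfolding minimal_zero_sum_def by blast
      qed
      ultimately have "has_k_disjoint_zs S k" using F''(2) unfolding has_k_disjoint_zs_def by blast
      with S show False by simp
    qed
  qed
  moreover have "size C = Dk (UNIV :: 'a set) k" using S C_def by simp
  ultimately show ?thesis using zC by blast
qed

theorem lemma6p1:
  fixes B :: "'a::{ab_group_add, finite} multiset" and g :: 'a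
  assumes nontriv: "(UNIV :: 'a set) \<noteq> {0}"
    and B: "zero_sum B"
    and g: "g \<noteq> 0"
  shows "Max (Lset (B + {#-g, g#})) = 1 + Max (Lset B)
     \<and> (\<forall>k\<ge>1. Dk (UNIV :: 'a set) (k + 1) \<ge> Dk (UNIV :: 'a set) k + 2)
     \<and> (\<forall>k\<ge>1. \<forall>C :: 'a multiset. zero_sum C \<and> Max (Lset C) \<le> k
            \<and> size C = Dk (UNIV :: 'a set) k \<longrightarrow> 0 \<notin># C)"
proof (intro conjI allI impI)
  show "Max (Lset (B + {#-g, g#})) = 1 + Max (Lset B)" by (rule part1[OF B g])
next
  fix k :: nat assume k: "k \<ge> 1"
  obtain C :: "'a multiset" where C: "zero_sum C" "Max (Lset C) \<le> k" "size C = Dk (UNIV :: 'a set) k"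
    using exists_C[OF k] by blast
  have zC': "zero_sum (C + {#-g, g#})" using C by (simp add: zero_sum_def)
  have "Max (Lset (C + {#-g, g#})) \<le> k + 1" using part1[OF C(1) g] C by simp
  from len_bound[OF _ zC' this] have "size (C + {#-g, g#}) \<le> Dk (UNIV :: 'a set) (k + 1)" by simp
  then show "Dk (UNIV :: 'a set) (k + 1) \<ge> Dk (UNIV :: 'a set) k + 2" using C by simp
next
  fix k :: nat and C :: "'a multiset"
  assume k: "k \<ge> 1" and C: "zero_sum C \<and> Max (Lset C) \<le> k \<and> size C = Dk (UNIV :: 'a set) k"
  show "0 \<notin># C"
  proof
    assume z: "0 \<in># C"
    define C' where "C' = C - {#0#}"
    have CC: "C = add_mset 0 C'" using z C'_def by simp
    have zC': "zero_sum C'" using C CC by (simp add: zero_sum_def)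
    have one: "1 \<in> Lset {#0::'a#}" unfolding Lset_def using minimal_zero
      by (auto intro!: exI[where x="{#{#0#}#}"])
    have "Max (Lset C') \<le> k - 1"
    proof (rule Max_le_L[OF zC'])
      fix t assume "t \<in> Lset C'"
      from Lset_add[OF one this] CC have "1 + t \<in> Lset C" by simp
      then have "1 + t \<le> Max (Lset C)" by (rule Max_ge_L)
      then show "t \<le> k - 1" using C by linarith
    qed
    then have M: "Max (Lset (C' + {#-g, g#})) \<le> k" using part1[OF zC' g] k by simp
    have zC'': "zero_sum (C' + {#-g, g#})" using zC' by (simp add: zero_sum_def)
    from len_bound[OF k zC'' M] C CC show False by simp
  qed
qed

end
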